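(* Let $n,m,k$ be positive integers and let $\varphi$ be an automorphism of $\Gamma=\mathbb{Z}_{nm}\mathbin{\mathrm{wr}}\mathbb{Z}^k$. Let $\varphi_n$ and $\varphi_m$ be the automorphisms of $\mathbb{Z}_n\mathbin{\mathrm{wr}}\mathbb{Z}^k$ and $\mathbb{Z}_m\mathbin{\mathrm{wr}}\mathbb{Z}^k$ determined by $\Pi_n\circ\varphi=\varphi_n\circ\Pi_n$ and $\Pi_m\circ\varphi=\varphi_m\circ\Pi_m$. If $R(\varphi_n')=R(\varphi_m')=1$, then $R(\varphi')=1$.
   Context: $\mathbb{Z}_q\mathbin{\mathrm{wr}}\mathbb{Z}^k=\bigoplus_{x\in\mathbb{Z}^k}(\mathbb{Z}_q)_x\rtimes_\alpha\mathbb{Z}^k$ is the restricted wreath product, $\alpha(z)$ mapping $(\mathbb{Z}_q)_x$ onto $(\mathbb{Z}_q)_{z+x}$; its torsion subgroup $\Sigma_q=\bigoplus_x(\mathbb{Z}_q)_x$ is characteristic, and for an automorphism $\psi$, $\psi'$ denotes the restriction of $\psi$ to the torsion subgroup. For $d\mid nm$, $\Pi_d\colon\mathbb{Z}_{nm}\mathbin{\mathrm{wr}}\mathbb{Z}^k\to\mathbb{Z}_d\mathbin{\mathrm{wr}}\mathbb{Z}^k$ is $\Pi_d(\sigma,z)=(\pi_d(\sigma),z)$, where $\pi_d$ reduces every coefficient mod $d$; its kernel is characteristic, so $\varphi_d$ is well defined. $R(\psi)$ denotes the Reidemeister number: the number of classes of the relation $g_1\sim hg_2\psi(h^{-1})$;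 for the abelian group $\Sigma$, $R(\varphi')=1$ means $1-\varphi'$ is surjective. *)

theory Defs
  imports "HOL-Algebra.Group" "HOL-Algebra.Coset"
begin

text \<open>Elements of Z_q wr Z^k: pairs (sigma, z) with sigma : Z^k -> Z_q finitely supported
  (Z_q represented by {0..<q}) and z in Z^k (represented by 'k => int, 'k a finite type with k elements).\<close>

type_synonym 'k wr_elem = "(('k \<Rightarrow> int) \<Rightarrow> int) \<times> ('k \<Rightarrow> int)"

definition wr :: "nat \<Rightarrow> ('k::finite) wr_elem monoid" where
  "wr q = \<lparr> carrier = {(\<sigma>, z). finite {x. \<sigma> x \<noteq> 0} \<and> (\<forall>x. \<sigma> x \<in> {0..<int q})},
           mult = (\<lambda>(\<sigma>, z) (\<tau>, w). (\<lambda>x. (\<sigma> x + \<tau> (\<lambda>i. x i - z i)) mod int q, \<lambda>i. z i + w i)),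
           one = (\<lambda>x. 0, \<lambda>i. 0) \<rparr>"

text \<open>The torsion subgroup Sigma_q = direct sum of the lamp groups.\<close>
definition torsion :: "nat \<Rightarrow> ('k::finite) wr_elem set" where
  "torsion q = {g \<in> carrier (wr q :: 'k wr_elem monoid). snd g = (\<lambda>i. 0)}"

definition Proj :: "nat \<Rightarrow> ('k::finite) wr_elem \<Rightarrow> 'k wr_elem" where
  "Proj d g = (\<lambda>x. fst g x mod int d, snd g)"

text \<open>Twisted conjugacy and the Reidemeister number (number of classes; card = 0 if infinitely many).\<close>
definition twisted_conj :: "('a, 'b) monoid_scheme \<Rightarrow> ('a \<Rightarrow> 'a) \<Rightarrow> ('a \<times> 'a) set" where
  "twisted_conj G \<psi> = {(g1, g2). g1 \<in> carrier G \<and> g2 \<in> carrier G \<and>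
      (\<exists>h\<in>carrier G. g1 = h \<otimes>\<^bsub>G\<^esub> g2 \<otimes>\<^bsub>G\<^esub> \<psi> (inv\<^bsub>G\<^esub> h))}"

definition reidemeister :: "('a, 'b) monoid_scheme \<Rightarrow> ('a \<Rightarrow> 'a) \<Rightarrow> nat" where
  "reidemeister G \<psi> = card (carrier G // twisted_conj G \<psi>)"

end

theory Submission
  imports Defs
begin

lemma wr_mult: "(s, z) \<otimes>\<^bsub>wr q\<^esub> (t, w) = (\<lambda>x. (s x + t (\<lambda>i. x i - z i)) mod int q, \<lambda>i. z i + w i)"
  by (simp add: wr_def)
lemma wr_one: "\<one>\<^bsub>wr q\<^esub> = (\<lambda>x. 0, \<lambda>i. 0)" by (simp add: wr_def)
lemma wr_carrier: "(s, z) \<in> carrier (wr q) \<longleftrightarrow> finite {x. s x \<noteq> 0} \<and> (\<forall>x. 0 \<le> s x \<and> s x < int q)"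
  by (simp add: wr_def)

lemma finite_shift:
  fixes t :: "('k \<Rightarrow> int) \<Rightarrow> int"
  assumes "finite {x. t x \<noteq> 0}"
  shows "finite {x. t (\<lambda>i. x i - z i) \<noteq> 0}"
proof -
  have "{x. t (\<lambda>i. x i - z i) \<noteq> 0} = (\<lambda>y. \<lambda>i. y i + z i) ` {x. t x \<noteq> 0}"
  proof
    show "{x. t (\<lambda>i. x i - z i) \<noteq> 0} \<subseteq> (\<lambda>y. \<lambda>i. y i + z i) ` {x. t x \<noteq> 0}"
    proof
      fix x assume "x \<in> {x. t (\<lambda>i. x i - z i) \<noteq> 0}"
      then show "x \<in> (\<lambda>y. \<lambda>i. y i + z i) ` {x. t x \<noteq> 0}"
        by (intro image_eqI[of _ _ "\<lambda>i. x i - z i"]) auto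
    qed
  qed auto
  then show ?thesis using assms by simp
qed

lemma wr_group: assumes "q > 0" shows "group (wr q :: ('k::finite) wr_elem monoid)"
proof (rule groupI)
  fix x y assume x: "x \<in> carrier (wr q :: 'k wr_elem monoid)" and y: "y \<in> carrier (wr q :: 'k wr_elem monoid)"
  obtain s z where xs: "x = (s, z)" by force
  obtain t w where ys: "y = (t, w)" by force
  have "{xa. (s xa + t (\<lambda>i. xa i - z i)) mod int q \<noteq> 0} \<subseteq> {x. s x \<noteq> 0} \<union> {x. t (\<lambda>i. x i - z i) \<noteq> 0}"
    by auto
  moreover have "finite ({x. s x \<noteq> 0} \<union> {x. t (\<lambda>i. x i - z i) \<noteq> 0})"
    using x y finite_shift[of t z] by (simp add: xs ys wr_carrier)
  ultimately show "x \<otimes>\<^bsub>wr q\<^esub> y \<in> carrier (wr q)"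
    using assms by (simp add: xs ys wr_mult wr_carrier finite_subset)
next
  show "\<one>\<^bsub>wr q\<^esub> \<in> carrier (wr q :: 'k wr_elem monoid)" using assms by (simp add: wr_one wr_carrier)
next
  fix x y u assume x: "x \<in> carrier (wr q :: 'k wr_elem monoid)" and y: "y \<in> carrier (wr q :: 'k wr_elem monoid)"
    and u: "u \<in> carrier (wr q :: 'k wr_elem monoid)"
  obtain s z where xs: "x = (s, z)" by force
  obtain t w where ys: "y = (t, w)" by force
  obtain r v where us: "u = (r, v)" by force
  show "x \<otimes>\<^bsub>wr q\<^esub> y \<otimes>\<^bsub>wr q\<^esub> u = x \<otimes>\<^bsub>wr q\<^esub> (y \<otimes>\<^bsub>wr q\<^esub> u)"
    by (simp add: xs ys us wr_mult mod_add_left_eq mod_add_right_eq add.assoc diff_diff_eq)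
next
  fix x assume x: "x \<in> carrier (wr q :: 'k wr_elem monoid)"
  obtain s z where xs: "x = (s, z)" by force
  show "\<one>\<^bsub>wr q\<^esub> \<otimes>\<^bsub>wr q\<^esub> x = x" using x by (simp add: xs wr_one wr_mult wr_carrier)
next
  fix x assume x: "x \<in> carrier (wr q :: 'k wr_elem monoid)"
  obtain s z where xs: "x = (s, z)" by force
  let ?y = "(\<lambda>x. (- s (\<lambda>i. x i + z i)) mod int q, \<lambda>i. - z i)"
  have "finite {x. (- s (\<lambda>i. x i + z i)) mod int q \<noteq> 0}"
    using finite_shift[of s "\<lambda>i. - z i"] x
    by (rule_tac finite_subset[of _ "{x. s (\<lambda>i. x i - - z i) \<noteq> 0}"]) (auto simp: xs wr_carrier)
  then have "?y \<in> carrier (wr q)" using assms by (simp add: wr_carrier)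
  moreover have "?y \<otimes>\<^bsub>wr q\<^esub> x = \<one>\<^bsub>wr q\<^esub>"
    by (simp add: xs wr_mult wr_one mod_add_left_eq)
  ultimately show "\<exists>y\<in>carrier (wr q). y \<otimes>\<^bsub>wr q\<^esub> x = \<one>\<^bsub>wr q\<^esub>" by blast
qed

lemma reid_to_surj:
  fixes G (structure)
  assumes G: "comm_group G" and hom: "group_hom G G \<psi>"
    and R: "reidemeister G (restrict \<psi> (carrier G)) = 1"
  shows "\<forall>u\<in>carrier G. \<exists>h\<in>carrier G. u = h \<otimes>\<^bsub>G\<^esub> inv\<^bsub>G\<^esub> (\<psi> h)"
proof
  interpret comm_group G by (rule G)
  interpret group_hom G G \<psi> by (rule hom)
  fix u assume u: "u \<in> carrier G"
  let ?R = "twisted_conj G (restrict \<psi> (carrier G))"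
  from R obtain C where C: "carrier G // ?R = {C}"
    unfolding reidemeister_def by (meson card_1_singletonE)
  have e1: "?R``{u} \<in> carrier G // ?R" using u by (rule quotientI)
  have e2: "?R``{\<one>} \<in> carrier G // ?R" by (rule quotientI) simp
  have eq: "?R``{u} = ?R``{\<one>}" using e1 e2 unfolding C by simp
  have "u = \<one> \<otimes> u \<otimes> restrict \<psi> (carrier G) (inv \<one>)" using u by simp
  then have "(u, u) \<in> ?R" unfolding twisted_conj_def using u by blast
  then have "u \<in> ?R``{u}" by simp
  then have "u \<in> ?R``{\<one>}" by (simp only: eq)
  then have "(\<one>, u) \<in> ?R" by simp
  then obtain h where h: "h \<in> carrier G" and e: "\<one> = h \<otimes> u \<otimes> restrict \<psi> (carrier G) (inv h)"
    unfolding twisted_conj_def by blast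
  have e3: "\<one> = h \<otimes> u \<otimes> inv (\<psi> h)" using e h by simp
  have "inv h \<otimes> \<psi> h = inv h \<otimes> (h \<otimes> u \<otimes> inv (\<psi> h)) \<otimes> \<psi> h" using h by (simp flip: e3)
  also have "\<dots> = (inv h \<otimes> h) \<otimes> u \<otimes> (inv (\<psi> h) \<otimes> \<psi> h)" using h u by (simp add: m_assoc) (simp add: m_assoc[symmetric])
  also have "\<dots> = u" using h u by (simp add: m_assoc[symmetric])
  finally have "u = inv h \<otimes> inv (\<psi> (inv h))" using h by simp
  then show "\<exists>h\<in>carrier G. u = h \<otimes> inv (\<psi> h)" using h by (intro bexI[of _ "inv h"]) auto
qed

lemma surj_to_reid:
  fixes G (structure)
  assumes G: "comm_group G" and hom: "group_hom G G \<psi>"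
    and S: "\<forall>u\<in>carrier G. \<exists>h\<in>carrier G. u = h \<otimes>\<^bsub>G\<^esub> inv\<^bsub>G\<^esub> (\<psi> h)"
  shows "reidemeister G (restrict \<psi> (carrier G)) = 1"
proof -
  interpret comm_group G by (rule G)
  interpret group_hom G G \<psi> by (rule hom)
  let ?R = "twisted_conj G (restrict \<psi> (carrier G))"
  have all: "?R``{x} = carrier G" if x: "x \<in> carrier G" for x
  proof
    show "?R``{x} \<subseteq> carrier G"
    proof
      fix y assume "y \<in> ?R``{x}"
      then have "(x, y) \<in> ?R" by (rule ImageE) simp
      then show "y \<in> carrier G" unfolding twisted_conj_def by (simp only: mem_Collect_eq prod.case)
    qed
    show "carrier G \<subseteq> ?R``{x}"
    proof
      fix y assume y: "y \<in> carrier G"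
      have "x \<otimes> inv y \<in> carrier G" using x y by simp
      then obtain h where h: "h \<in> carrier G" and e: "x \<otimes> inv y = h \<otimes> inv (\<psi> h)"
        using S by blast
      have hx: "h \<otimes> inv (\<psi> h) = x \<otimes> inv y" using e by simp
      have "h \<otimes> y \<otimes> restrict \<psi> (carrier G) (inv h) = h \<otimes> y \<otimes> inv (\<psi> h)" using h by simp
      also have "\<dots> = (h \<otimes> inv (\<psi> h)) \<otimes> y" using h y by (simp add: m_ac)
      also have "\<dots> = (x \<otimes> inv y) \<otimes> y" by (simp only: hx)
      also have "\<dots> = x" using x y by (simp add: m_assoc)
      finally have "x = h \<otimes> y \<otimes> restrict \<psi> (carrier G) (inv h)" by (rule sym)
      then have "(x, y) \<in> ?R" unfolding twisted_conj_def using x y h by blast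
      then show "y \<in> ?R``{x}" by simp
    qed
  qed
  have "carrier G // ?R = (\<Union>x\<in>carrier G. {carrier G})"
    unfolding quotient_def using all by (simp cong: SUP_cong)
  also have "\<dots> = {carrier G}"
  proof -
    have ne: "carrier G \<noteq> {}" using one_closed by blast
    then show ?thesis by (simp add: UN_constant)
  qed
  finally have "carrier G // ?R = {carrier G}" .
  then show ?thesis unfolding reidemeister_def by simp
qed

abbreviation S :: "nat \<Rightarrow> ('k::finite) wr_elem monoid" where
  "S q \<equiv> (wr q)\<lparr>carrier := torsion q\<rparr>"

lemma tor_mem: "(s, z) \<in> torsion q \<longleftrightarrow> z = (\<lambda>i. 0) \<and> finite {x. s x \<noteq> 0} \<and> (\<forall>x. 0 \<le> s x \<and> s x < int q)"
  by (auto simp: torsion_def wr_carrier)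

lemma tor_memE: assumes "g \<in> torsion q"
  obtains s where "g = (s, \<lambda>i. 0)" "finite {x. s x \<noteq> 0}" "\<forall>x. 0 \<le> s x \<and> s x < int q"
  using assms by (cases g) (auto simp: tor_mem)

lemma tor_mult: "(s, \<lambda>i. 0) \<otimes>\<^bsub>wr q\<^esub> (t, \<lambda>i. 0) = (\<lambda>x. (s x + t x) mod int q, \<lambda>i. 0)"
  by (simp add: wr_mult)

lemma wr_inv:
  assumes q: "q > 0" and x: "(s, z) \<in> carrier (wr q :: ('k::finite) wr_elem monoid)"
  shows "inv\<^bsub>wr q\<^esub> (s, z) = (\<lambda>x. (- s (\<lambda>i. x i + z i)) mod int q, \<lambda>i. - z i)"
proof -
  interpret group "wr q :: 'k wr_elem monoid" using wr_group q by blast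
  let ?y = "(\<lambda>x. (- s (\<lambda>i. x i + z i)) mod int q, \<lambda>i. - z i)"
  have "finite {x. (- s (\<lambda>i. x i + z i)) mod int q \<noteq> 0}"
    using finite_shift[of s "\<lambda>i. - z i"] x
    by (rule_tac finite_subset[of _ "{x. s (\<lambda>i. x i - - z i) \<noteq> 0}"]) (auto simp: wr_carrier)
  then have y: "?y \<in> carrier (wr q)" using q by (simp add: wr_carrier)
  have "?y \<otimes>\<^bsub>wr q\<^esub> (s, z) = \<one>\<^bsub>wr q\<^esub>"
    by (simp add: wr_mult wr_one mod_add_left_eq)
  then show ?thesis using inv_equality[OF _ x y] by simp
qed

lemma tor_inv:
  assumes q: "q > 0" and x: "(s, \<lambda>i. 0) \<in> torsion q"
  shows "inv\<^bsub>wr q\<^esub> (s, \<lambda>i. 0) = (\<lambda>x. (- s x) mod int q, \<lambda>i. 0)"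
  using wr_inv[OF q, of s "\<lambda>i. 0"] x by (simp add: torsion_def)

lemma tor_subgroup:
  assumes q: "q > 0"
  shows "subgroup (torsion q) (wr q :: ('k::finite) wr_elem monoid)"
proof -
  interpret group "wr q :: 'k wr_elem monoid" using wr_group q by blast
  show ?thesis
  proof (rule subgroupI)
    show "torsion q \<subseteq> carrier (wr q :: 'k wr_elem monoid)" by (auto simp: torsion_def)
    have "((\<lambda>x. 0, \<lambda>i. 0) :: 'k wr_elem) \<in> torsion q" using q by (simp add: tor_mem)
    then show "torsion q \<noteq> ({} :: 'k wr_elem set)" by blast
  next
    fix a :: "'k wr_elem" assume a: "a \<in> torsion q"
    then obtain s where s: "a = (s, \<lambda>i. 0)" by (auto elim: tor_memE)
    have "inv\<^bsub>wr q\<^esub> a \<in> carrier (wr q)" using a by (auto simp: torsion_def)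
    moreover have "inv\<^bsub>wr q\<^esub> a = (\<lambda>x. (- s x) mod int q, \<lambda>i. 0)" using tor_inv[OF q, of s] a s by simp
    ultimately show "inv\<^bsub>wr q\<^esub> a \<in> torsion q" by (simp add: torsion_def)
  next
    fix a b :: "'k wr_elem" assume a: "a \<in> torsion q" and b: "b \<in> torsion q"
    then obtain s t where "a = (s, \<lambda>i. 0)" "b = (t, \<lambda>i. 0)" by (auto elim!: tor_memE)
    moreover have "a \<otimes>\<^bsub>wr q\<^esub> b \<in> carrier (wr q)" using a b by (auto simp: torsion_def)
    ultimately show "a \<otimes>\<^bsub>wr q\<^esub> b \<in> torsion q" by (simp add: torsion_def tor_mult)
  qed
qed

lemma S_comm_group:
  assumes q: "q > 0"
  shows "comm_group (S q :: ('k::finite) wr_elem monoid)"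
proof -
  interpret group "wr q :: 'k wr_elem monoid" using wr_group q by blast
  interpret G: group "S q :: 'k wr_elem monoid" using subgroup_imp_group[OF tor_subgroup[OF q]] .
  show ?thesis
  proof (rule G.group_comm_groupI)
    fix x y :: "'k wr_elem" assume "x \<in> carrier (S q)" "y \<in> carrier (S q)"
    then obtain s t where "x = (s, \<lambda>i. 0)" "y = (t, \<lambda>i. 0)" by (auto elim!: tor_memE)
    then show "x \<otimes>\<^bsub>S q\<^esub> y = y \<otimes>\<^bsub>S q\<^esub> x" by (simp add: tor_mult add.commute)
  qed
qed

lemma S_inv:
  fixes s :: "('k::finite \<Rightarrow> int) \<Rightarrow> int"
  assumes q: "q > 0" and x: "(s, \<lambda>i. 0) \<in> torsion q"
  shows "inv\<^bsub>S q\<^esub> (s, \<lambda>i. 0) = (\<lambda>x. (- s x) mod int q, \<lambda>i. 0)"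
proof -
  interpret group "wr q :: 'k wr_elem monoid" using wr_group q by blast
  show ?thesis using m_inv_consistent[OF tor_subgroup[OF q] x] tor_inv[OF q x] by simp
qed

lemma pow_snd: fixes x :: "('k::finite) wr_elem" shows "snd (x [^]\<^bsub>wr q\<^esub> (k::nat)) = (\<lambda>i. int k * snd x i)"
proof (induction k)
  case 0 then show ?case by (simp add: wr_one)
next
  case (Suc k)
  obtain s z where x: "x = (s, z)" by force
  obtain t w where p: "x [^]\<^bsub>wr q\<^esub> k = (t, w)" by force
  show ?case using Suc p by (simp add: x wr_mult algebra_simps)
qed

lemma tor_pow: fixes s :: "('k::finite \<Rightarrow> int) \<Rightarrow> int" shows "(s, \<lambda>i. 0) [^]\<^bsub>wr q\<^esub> (k::nat) = (\<lambda>a. (int k * s a) mod int q, \<lambda>i. 0)"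
proof (induction k)
  case 0 then show ?case by (simp add: wr_one)
next
  case (Suc k)
  then show ?case by (simp add: tor_mult mod_add_right_eq algebra_simps)
qed

lemma S_pow: fixes s :: "('k::finite \<Rightarrow> int) \<Rightarrow> int" shows "(s, \<lambda>i. 0) [^]\<^bsub>S q\<^esub> (k::nat) = (\<lambda>a. (int k * s a) mod int q, \<lambda>i. 0)"
  using tor_pow[where s=s and q=q and k=k] by (simp add: nat_pow_def)

lemma hom_tor:
  fixes \<phi> :: "('k::finite) wr_elem \<Rightarrow> 'k wr_elem"
  assumes q: "q > 0" and h: "\<phi> \<in> hom (wr q) (wr q :: ('k::finite) wr_elem monoid)" and g: "g \<in> torsion q"
  shows "\<phi> g \<in> torsion q"
proof -
  interpret G: group "wr q :: 'k wr_elem monoid" using wr_group q by blast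
  interpret group_hom "wr q :: 'k wr_elem monoid" "wr q" \<phi>
    using h by (simp add: group_hom_def group_hom_axioms_def G.group_axioms)
  obtain s where s: "g = (s, \<lambda>i. 0)" and sr: "\<forall>x. 0 \<le> s x \<and> s x < int q" using g by (auto elim: tor_memE)
  have gc: "g \<in> carrier (wr q)" using g by (simp add: torsion_def)
  have "g [^]\<^bsub>wr q\<^esub> q = \<one>\<^bsub>wr q\<^esub>" by (simp add: s tor_pow wr_one)
  then have "\<phi> g [^]\<^bsub>wr q\<^esub> q = \<one>\<^bsub>wr q\<^esub>" using hom_nat_pow[OF gc, of q] by simp
  then have "snd (\<phi> g [^]\<^bsub>wr q\<^esub> q) = (\<lambda>i. 0)" by (simp add: wr_one)
  then have "\<forall>i. int q * snd (\<phi> g) i = 0" by (simp add: pow_snd fun_eq_iff)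
  then have "snd (\<phi> g) = (\<lambda>i. 0)" using q by (simp add: fun_eq_iff)
  moreover have "\<phi> g \<in> carrier (wr q)" using gc by simp
  ultimately show ?thesis by (simp add: torsion_def)
qed

lemma hom_S:
  fixes \<phi> :: "('k::finite) wr_elem \<Rightarrow> 'k wr_elem"
  assumes q: "q > 0" and h: "\<phi> \<in> hom (wr q) (wr q :: ('k::finite) wr_elem monoid)"
  shows "group_hom (S q) (S q :: 'k wr_elem monoid) \<phi>"
proof -
  interpret G: group "wr q :: 'k wr_elem monoid" using wr_group q by blast
  interpret SG: comm_group "S q :: 'k wr_elem monoid" using S_comm_group[OF q] .
  have "\<phi> \<in> hom (S q) (S q)"
    using h hom_tor[OF q h] by (auto simp: hom_def torsion_def)
  then show ?thesis by (simp add: group_hom_def group_hom_axioms_def SG.is_group)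
qed

lemma Proj_tor: "Proj d (s, \<lambda>i. 0) = (\<lambda>x. s x mod int d, \<lambda>i. 0)"
  by (simp add: Proj_def)

lemma Proj_hom:
  assumes d: "d > 0" and q: "q > 0" and dq: "d dvd q"
  shows "group_hom (S q) (S d :: ('k::finite) wr_elem monoid) (Proj d)"
proof -
  interpret SG: comm_group "S q :: 'k wr_elem monoid" using S_comm_group[OF q] .
  interpret SD: comm_group "S d :: 'k wr_elem monoid" using S_comm_group[OF d] .
  have cl: "Proj d g \<in> torsion d" if g: "g \<in> torsion q" for g :: "'k wr_elem"
  proof -
    obtain s where s: "g = (s, \<lambda>i. 0)" "finite {x. s x \<noteq> 0}" using g by (auto elim: tor_memE)
    have "finite {x. s x mod int d \<noteq> 0}" by (rule finite_subset[OF _ s(2)]) auto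
    then show ?thesis using d by (simp add: s Proj_tor tor_mem)
  qed
  have "Proj d \<in> hom (S q :: 'k wr_elem monoid) (S d)"
  proof (rule homI)
    fix x :: "'k wr_elem" assume "x \<in> carrier (S q)"
    then show "Proj d x \<in> carrier (S d)" using cl by simp
  next
    fix x y :: "'k wr_elem" assume x: "x \<in> carrier (S q)" and y: "y \<in> carrier (S q)"
    then obtain s t where "x = (s, \<lambda>i. 0)" "y = (t, \<lambda>i. 0)" by (auto elim!: tor_memE)
    moreover have "int d dvd int q" using dq by simp
    then have "\<And>a b. (a + b) mod int q mod int d = (a mod int d + b mod int d) mod int d"
      by (simp add: mod_mod_cancel mod_add_eq)
    ultimately show "Proj d (x \<otimes>\<^bsub>S q\<^esub> y) = Proj d x \<otimes>\<^bsub>S d\<^esub> Proj d y"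
      by (simp add: tor_mult Proj_tor)
  qed
  then show ?thesis by (simp add: group_hom_def group_hom_axioms_def SG.group_axioms SD.group_axioms)
qed

lemma tor_sub:
  assumes "d dvd q" "q > 0" and g: "g \<in> torsion d"
  shows "g \<in> torsion q" "Proj d g = g"
proof -
  have "d \<le> q" using assms by (simp add: dvd_imp_le)
  obtain s where s: "g = (s, \<lambda>i. 0)" "finite {x. s x \<noteq> 0}" "\<forall>x. 0 \<le> s x \<and> s x < int d"
    using g by (auto elim: tor_memE)
  have "\<forall>x. 0 \<le> s x \<and> s x < int q" proof
    fix x
    have "int d \<le> int q" using \<open>d \<le> q\<close> by simp
    then show "0 \<le> s x \<and> s x < int q" using s(3) by (meson less_le_trans)
  qed
  then show "g \<in> torsion q" using s by (simp add: tor_mem)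
  show "Proj d g = g" using s by (simp add: Proj_tor)
qed

lemma D_hom:
  fixes G (structure)
  assumes G: "comm_group G" and hom: "group_hom G G \<psi>"
  shows "group_hom G G (\<lambda>h. h \<otimes> inv (\<psi> h))"
proof -
  interpret comm_group G by (rule G)
  interpret group_hom G G \<psi> by (rule hom)
  have "(\<lambda>h. h \<otimes> inv (\<psi> h)) \<in> hom G G"
  proof (rule homI)
    fix x assume "x \<in> carrier G"
    then show "x \<otimes> inv (\<psi> x) \<in> carrier G" by simp
  next
    fix x y assume x: "x \<in> carrier G" and y: "y \<in> carrier G"
    have "x \<otimes> y \<otimes> inv (\<psi> (x \<otimes> y)) = x \<otimes> y \<otimes> (inv (\<psi> x) \<otimes> inv (\<psi> y))"
      using x y by (simp add: inv_mult)
    also have "\<dots> = x \<otimes> inv (\<psi> x) \<otimes> (y \<otimes> inv (\<psi> y))"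
      using x y by (simp add: m_ac)
    finally show "x \<otimes> y \<otimes> inv (\<psi> (x \<otimes> y)) = x \<otimes> inv (\<psi> x) \<otimes> (y \<otimes> inv (\<psi> y))" .
  qed
  then show ?thesis using G by (simp add: group_hom_def group_hom_axioms_def is_group)
qed

lemma div_lift:
  assumes n: "n > 0" and m: "m > 0" and g: "g \<in> torsion (n * m)"
    and p: "Proj m g = (\<lambda>x. 0, \<lambda>i. 0)"
  shows "\<exists>\<tau>\<in>torsion n. g = \<tau> [^]\<^bsub>S (n * m)\<^esub> m"
proof -
  obtain s where s: "g = (s, \<lambda>i. 0)" "finite {x. s x \<noteq> 0}" "\<forall>x. 0 \<le> s x \<and> s x < int (n * m)"
    using g by (auto elim: tor_memE)
  have z: "s x mod int m = 0" for x using p s(1) by (simp add: Proj_tor fun_eq_iff)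
  have sx: "s x = int m * (s x div int m)" for x using z[of x] by (metis mult_div_mod_eq add_0_right)
  let ?t = "\<lambda>x. s x div int m"
  have "finite {x. ?t x \<noteq> 0}" by (rule finite_subset[OF _ s(2)]) auto
  moreover have "0 \<le> ?t x \<and> ?t x < int n" for x
  proof
    have "0 \<le> s x" "0 < int m" using s(3) m by auto
    then show "0 \<le> ?t x" by (simp add: pos_imp_zdiv_nonneg_iff)
    have "int m * ?t x < int m * int n" using s(3) sx[of x] by (simp add: mult.commute)
    then show "?t x < int n" using m by simp
  qed
  ultimately have tn: "(?t, \<lambda>i. 0) \<in> torsion n" by (simp add: tor_mem)
  have "(?t, \<lambda>i. 0) [^]\<^bsub>S (n * m)\<^esub> m = (\<lambda>a. (int m * ?t a) mod int (n * m), \<lambda>i. 0)"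
    by (rule S_pow)
  also have "\<dots> = (s, \<lambda>i. 0)"
  proof -
    have "(int m * ?t a) mod int (n * m) = s a" for a
      using sx[of a, symmetric] s(3) by simp
    then show ?thesis by auto
  qed
  finally have "g = (?t, \<lambda>i. 0) [^]\<^bsub>S (n * m)\<^esub> m" using s(1) by simp
  then show ?thesis using tn by (rule bexI)
qed

lemma pow_eq:
  assumes x: "x \<in> torsion (n * m)" and y: "y \<in> torsion (n * m)" and e: "Proj n x = Proj n y"
  shows "x [^]\<^bsub>S (n * m)\<^esub> m = (y [^]\<^bsub>S (n * m)\<^esub> m :: ('k::finite) wr_elem)"
proof -
  obtain s where s: "x = (s, \<lambda>i. 0)" using x by (auto elim: tor_memE)
  obtain t where t: "y = (t, \<lambda>i. 0)" using y by (auto elim: tor_memE)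
  have st: "s a mod int n = t a mod int n" for a using e by (simp add: s t Proj_tor fun_eq_iff)
  have "(int m * s a) mod int (n * m) = (int m * t a) mod int (n * m)" for a
  proof -
    have "(int m * s a) mod int (n * m) = int m * (s a mod int n)"
      by (simp add: mult.commute[of n m] mod_mult_mult1)
    also have "\<dots> = int m * (t a mod int n)" by (simp add: st)
    also have "\<dots> = (int m * t a) mod int (n * m)"
      by (simp add: mult.commute[of n m] mod_mult_mult1)
    finally show ?thesis .
  qed
  then have eq: "(\<lambda>a. (int m * s a) mod int (n * m)) = (\<lambda>a. (int m * t a) mod int (n * m))" by (rule ext)
  show ?thesis by (simp only: s t S_pow eq)
qed

theorem theorem4p3:
  fixes n m :: nat
    and \<phi> \<phi>n \<phi>m :: "('k::finite) wr_elem \<Rightarrow> 'k wr_elem"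
  assumes "n > 0" and "m > 0"
    and "\<phi> \<in> iso (wr (n * m)) (wr (n * m))"
    and "\<phi>n \<in> iso (wr n) (wr n)"
    and "\<phi>m \<in> iso (wr m) (wr m)"
    and "\<forall>g \<in> carrier (wr (n * m)). Proj n (\<phi> g) = \<phi>n (Proj n g)"
    and "\<forall>g \<in> carrier (wr (n * m)). Proj m (\<phi> g) = \<phi>m (Proj m g)"
    and "reidemeister ((wr n)\<lparr>carrier := torsion n\<rparr>) (restrict \<phi>n (torsion n)) = 1"
    and "reidemeister ((wr m)\<lparr>carrier := torsion m\<rparr>) (restrict \<phi>m (torsion m)) = 1"
  shows "reidemeister ((wr (n * m))\<lparr>carrier := torsion (n * m)\<rparr>) (restrict \<phi> (torsion (n * m))) = 1"
proof -
  note n = assms(1) and m = assms(2)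
  have nm: "n * m > 0" using n m by simp
  interpret G: comm_group "S (n * m) :: 'k wr_elem monoid" using S_comm_group[OF nm] .
  interpret N: comm_group "S n :: 'k wr_elem monoid" using S_comm_group[OF n] .
  interpret M: comm_group "S m :: 'k wr_elem monoid" using S_comm_group[OF m] .
  interpret PH: group_hom "S (n * m) :: 'k wr_elem monoid" "S (n * m)" \<phi>
    using hom_S[OF nm, of \<phi>] assms(3) unfolding iso_def by blast
  interpret PN: group_hom "S n :: 'k wr_elem monoid" "S n" \<phi>n
    using hom_S[OF n, of \<phi>n] assms(4) unfolding iso_def by blast
  interpret PM: group_hom "S m :: 'k wr_elem monoid" "S m" \<phi>m
    using hom_S[OF m, of \<phi>m] assms(5) unfolding iso_def by blast
  interpret Pn: group_hom "S (n * m) :: 'k wr_elem monoid" "S n" "Proj n"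
    using Proj_hom[OF n nm] by simp
  interpret Pm: group_hom "S (n * m) :: 'k wr_elem monoid" "S m" "Proj m"
    using Proj_hom[OF m nm] by simp
  interpret DG: group_hom "S (n * m) :: 'k wr_elem monoid" "S (n * m)" "\<lambda>h. h \<otimes>\<^bsub>S (n * m)\<^esub> inv\<^bsub>S (n * m)\<^esub> (\<phi> h)"
    using D_hom[OF G.comm_group_axioms PH.group_hom_axioms] .
  have DN: "\<forall>u\<in>torsion n. \<exists>h\<in>torsion n. u = h \<otimes>\<^bsub>S n\<^esub> inv\<^bsub>S n\<^esub> (\<phi>n h)"
    using reid_to_surj[OF N.comm_group_axioms PN.group_hom_axioms] assms(8) by simp
  have DM: "\<forall>u\<in>torsion m. \<exists>h\<in>torsion m. u = h \<otimes>\<^bsub>S m\<^esub> inv\<^bsub>S m\<^esub> (\<phi>m h)"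
    using reid_to_surj[OF M.comm_group_axioms PM.group_hom_axioms] assms(9) by simp
  have cn: "Proj n (\<phi> g) = \<phi>n (Proj n g)" if "g \<in> torsion (n * m)" for g
    using assms(6) that by (simp add: torsion_def)
  have cm: "Proj m (\<phi> g) = \<phi>m (Proj m g)" if "g \<in> torsion (n * m)" for g
    using assms(7) that by (simp add: torsion_def)
  have ndvd: "n dvd n * m" and mdvd: "m dvd n * m" by simp_all
  let ?D = "\<lambda>h. h \<otimes>\<^bsub>S (n * m)\<^esub> inv\<^bsub>S (n * m)\<^esub> (\<phi> h)"
  have main: "\<exists>h\<in>torsion (n * m). g = ?D h" if g: "g \<in> torsion (n * m)" for g
  proof -
    have "Proj m g \<in> torsion m" using g Pm.hom_closed by simp
    then obtain h1 where h1: "h1 \<in> torsion m" and e1: "Proj m g = h1 \<otimes>\<^bsub>S m\<^esub> inv\<^bsub>S m\<^esub> (\<phi>m h1)"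
      using DM by blast
    have h1G: "h1 \<in> torsion (n * m)" and h1P: "Proj m h1 = h1"
      using tor_sub[OF mdvd nm h1] by auto
    have D1: "?D h1 \<in> torsion (n * m)" using h1G DG.hom_closed by simp
    have h1phi: "\<phi> h1 \<in> torsion (n * m)" using h1G PH.hom_closed by simp
    have h1inv: "inv\<^bsub>S (n * m)\<^esub> (\<phi> h1) \<in> torsion (n * m)" using h1phi G.inv_closed by simp
    have "Proj m (?D h1) = Proj m h1 \<otimes>\<^bsub>S m\<^esub> inv\<^bsub>S m\<^esub> (Proj m (\<phi> h1))"
      using Pm.hom_mult[of h1 "inv\<^bsub>S (n * m)\<^esub> (\<phi> h1)"] Pm.hom_inv[of "\<phi> h1"] h1G h1phi h1inv by simp
    also have "\<dots> = Proj m g" using h1G by (simp add: cm h1P e1)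
    finally have PD1: "Proj m (?D h1) = Proj m g" .
    define g' where "g' = g \<otimes>\<^bsub>S (n * m)\<^esub> inv\<^bsub>S (n * m)\<^esub> (?D h1)"
    have D1i: "inv\<^bsub>S (n * m)\<^esub> (?D h1) \<in> torsion (n * m)" using G.inv_closed[of "?D h1"] D1 by simp
    have g'G: "g' \<in> torsion (n * m)" using G.m_closed[of g "inv\<^bsub>S (n * m)\<^esub> (?D h1)"] g D1i
      unfolding g'_def by simp
    have pg: "Proj m g \<in> torsion m" using Pm.hom_closed[of g] g by simp
    have "Proj m g' = Proj m g \<otimes>\<^bsub>S m\<^esub> inv\<^bsub>S m\<^esub> (Proj m g)"
      using Pm.hom_mult[of g "inv\<^bsub>S (n * m)\<^esub> (?D h1)"] Pm.hom_inv[of "?D h1"] g D1 D1i PD1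
      unfolding g'_def by simp
    also have "\<dots> = \<one>\<^bsub>S m\<^esub>" using M.r_inv[of "Proj m g"] pg by simp
    finally have "Proj m g' = (\<lambda>x. 0, \<lambda>i. 0)" by (simp add: wr_one)
    then obtain \<tau> where \<tau>: "\<tau> \<in> torsion n" and g'e: "g' = \<tau> [^]\<^bsub>S (n * m)\<^esub> m"
      using div_lift[OF n m g'G] by blast
    obtain h2 where h2: "h2 \<in> torsion n" and e2: "\<tau> = h2 \<otimes>\<^bsub>S n\<^esub> inv\<^bsub>S n\<^esub> (\<phi>n h2)"
      using DN \<tau> by blast
    have h2G: "h2 \<in> torsion (n * m)" and h2P: "Proj n h2 = h2"
      using tor_sub[OF ndvd nm h2] by auto
    have \<tau>G: "\<tau> \<in> torsion (n * m)" and \<tau>P: "Proj n \<tau> = \<tau>"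
      using tor_sub[OF ndvd nm \<tau>] by auto
    have D2: "?D h2 \<in> torsion (n * m)" using h2G DG.hom_closed by simp
    have h2phi: "\<phi> h2 \<in> torsion (n * m)" using h2G PH.hom_closed by simp
    have h2inv: "inv\<^bsub>S (n * m)\<^esub> (\<phi> h2) \<in> torsion (n * m)" using h2phi G.inv_closed by simp
    have "Proj n (?D h2) = Proj n h2 \<otimes>\<^bsub>S n\<^esub> inv\<^bsub>S n\<^esub> (Proj n (\<phi> h2))"
      using Pn.hom_mult[of h2 "inv\<^bsub>S (n * m)\<^esub> (\<phi> h2)"] Pn.hom_inv[of "\<phi> h2"] h2G h2phi h2inv by simp
    also have "\<dots> = \<tau>" using h2G by (simp add: cn h2P e2)
    also have "\<dots> = Proj n \<tau>" by (simp add: \<tau>P)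
    finally have "?D h2 [^]\<^bsub>S (n * m)\<^esub> m = \<tau> [^]\<^bsub>S (n * m)\<^esub> m"
      using pow_eq[OF D2 \<tau>G] by blast
    then have D2m: "?D h2 [^]\<^bsub>S (n * m)\<^esub> m = g'" using g'e by simp
    let ?h = "h1 \<otimes>\<^bsub>S (n * m)\<^esub> h2 [^]\<^bsub>S (n * m)\<^esub> m"
    have h2p: "h2 [^]\<^bsub>S (n * m)\<^esub> m \<in> torsion (n * m)" using G.nat_pow_closed[of h2 m] h2G by simp
    have hG: "?h \<in> torsion (n * m)" using G.m_closed[of h1 "h2 [^]\<^bsub>S (n * m)\<^esub> m"] h1G h2p by simp
    have "?D ?h = ?D h1 \<otimes>\<^bsub>S (n * m)\<^esub> ?D (h2 [^]\<^bsub>S (n * m)\<^esub> m)"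
      using DG.hom_mult[of h1 "h2 [^]\<^bsub>S (n * m)\<^esub> m"] h1G h2p by simp
    also have "\<dots> = ?D h1 \<otimes>\<^bsub>S (n * m)\<^esub> g'"
      using h2G DG.hom_nat_pow[of h2 m] D2m by simp
    also have "\<dots> = g" using g D1 unfolding g'_def
      using G.m_lcomm[of "?D h1" g "inv\<^bsub>S (n * m)\<^esub> (?D h1)"] G.r_inv[of "?D h1"] G.r_one[of g] D1i
      by simp
    finally show ?thesis using hG by (intro bexI[of _ ?h]) simp_all
  qed
  show ?thesis
    using surj_to_reid[OF G.comm_group_axioms PH.group_hom_axioms] main by simp
qed

end
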